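(* Let $A$ and $B$ be commutative groups. Then $B^A$ is a faithful $\mathbb{Z}_{e(B)}[A]$-module.
   Context: For commutative groups $A,B$, $B^A$ denotes the commutative group (under pointwise addition) of all maps $A\to B$. $\mathbb{Z}_n=\mathbb{Z}/n\mathbb{Z}$ ($\mathbb{Z}_0=\mathbb{Z}$); $e(B)=\exp(B)$ if $B$ has finite exponent and $e(B)=0$ otherwise. The module structure is $(\sum_a n_a[a])f=\sum_a n_a\tau_af$, where $(\tau_af)(x)=f(x+a)$. *)

theory Defs
  imports Main
begin

definition zsmult :: "int \<Rightarrow> 'b::ab_group_add \<Rightarrow> 'b" where
  "zsmult k x = (if 0 \<le> k then (\<Sum>_<nat k. x) else - (\<Sum>_<nat (- k). x))"

definition grp_exp :: "'b::ab_group_add itself \<Rightarrow> nat" where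
  "grp_exp _ = (if \<exists>n>0. \<forall>x::'b. zsmult (int n) x = 0
                then (LEAST n. n > 0 \<and> (\<forall>x::'b. zsmult (int n) x = 0)) else 0)"

text \<open>Elements of the group ring Z[A] are finitely supported maps A \<Rightarrow> int;
  the action on B^A: (\<Sum>_a n_a [a]) f = \<Sum>_a n_a \<tau>_a f, with (\<tau>_a f)(x) = f(x+a).\<close>
definition fin_supp :: "('a \<Rightarrow> int) \<Rightarrow> bool" where
  "fin_supp n \<longleftrightarrow> finite {a. n a \<noteq> 0}"

definition gr_act :: "('a::ab_group_add \<Rightarrow> int) \<Rightarrow> ('a \<Rightarrow> 'b::ab_group_add) \<Rightarrow> ('a \<Rightarrow> 'b)" where
  "gr_act n f = (\<lambda>x. \<Sum>a\<in>{a. n a \<noteq> 0}. zsmult (n a) (f (x + a)))"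

end

theory Submission
  imports Defs
begin

abbreviation nsm :: "nat \<Rightarrow> 'b::ab_group_add \<Rightarrow> 'b" where
  "nsm m x \<equiv> (\<Sum>_<m. x)"

lemma nsm_add: "nsm (m + k) x = nsm m x + nsm k (x::'b::ab_group_add)"
  by (induction k) (simp_all add: add.assoc)

lemma nsm_mult: "(\<forall>x::'b::ab_group_add. nsm e x = 0) \<Longrightarrow> nsm (e * k) (x::'b) = 0"
  by (induction k) (simp_all add: nsm_add)

lemma zsmult_zero_iff: "(\<forall>x::'b::ab_group_add. zsmult k x = 0) \<longleftrightarrow> (\<forall>x::'b. nsm (nat \<bar>k\<bar>) x = 0)"
  by (cases "0 \<le> k") (auto simp: zsmult_def)

lemma zsmult_0[simp]: "zsmult k (0::'b::ab_group_add) = 0"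
  by (simp add: zsmult_def)

lemma Pn_iff: "(\<forall>x::'b::ab_group_add. nsm m x = 0) \<longleftrightarrow> grp_exp TYPE('b) dvd m"
proof (cases "\<exists>n>0. \<forall>x::'b. zsmult (int n) x = 0")
  case True
  define e where "e = (LEAST n. n > 0 \<and> (\<forall>x::'b. zsmult (int n) x = 0))"
  have ge: "grp_exp TYPE('b) = e" using True by (simp add: grp_exp_def e_def)
  have Z: "\<And>n. zsmult (int n) (x::'b) = nsm n x" for x by (simp add: zsmult_def)
  from True obtain n0 where n0: "n0 > 0 \<and> (\<forall>x::'b. zsmult (int n0) x = 0)" by blast
  have e: "e > 0 \<and> (\<forall>x::'b. nsm e x = 0)"
    using LeastI[of "\<lambda>n. n > 0 \<and> (\<forall>x::'b. zsmult (int n) x = 0)", OF n0]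
    by (simp add: e_def Z)
  have min: "\<And>m. 0 < m \<Longrightarrow> (\<forall>x::'b. nsm m x = 0) \<Longrightarrow> e \<le> m"
    unfolding e_def by (rule Least_le) (simp add: Z)
  show ?thesis unfolding ge
  proof
    assume P: "\<forall>x::'b. nsm m x = 0"
    have "\<forall>x::'b. nsm (m mod e) x = 0"
    proof
      fix x :: 'b
      have "nsm m x = nsm (m mod e) x + nsm (e * (m div e)) x"
        using nsm_add[where m="m mod e" and k="e * (m div e)" and x=x] by simp
      then show "nsm (m mod e) x = 0" using P nsm_mult[where e=e and k="m div e" and x=x] e by simp
    qed
    moreover have "m mod e < e" using e by simp
    ultimately have "m mod e = 0" using min by (meson leD neq0_conv)
    then show "e dvd m" by (simp add: mod_eq_0_iff_dvd)
  next
    assume "e dvd m"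
    then obtain k where "m = e * k" by blast
    then show "\<forall>x::'b. nsm m x = 0" using nsm_mult e by blast
  qed
next
  case False
  have ge: "grp_exp TYPE('b) = 0" unfolding grp_exp_def by (rule if_not_P[OF False])
  have Z: "\<And>n. zsmult (int n) (x::'b) = nsm n x" for x by (simp add: zsmult_def)
  show ?thesis unfolding ge using False by (auto simp: Z)
qed

theorem lemma3p1:
  fixes n :: "'a::ab_group_add \<Rightarrow> int"
  assumes "fin_supp n"
  shows "(\<forall>f :: 'a \<Rightarrow> 'b::ab_group_add. gr_act n f = (\<lambda>_. 0))
           \<longleftrightarrow> (\<forall>a. int (grp_exp TYPE('b)) dvd n a)"
proof
  assume H: "\<forall>f :: 'a \<Rightarrow> 'b. gr_act n f = (\<lambda>_. 0)"
  show "\<forall>a. int (grp_exp TYPE('b)) dvd n a"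
  proof
    fix a0
    show "int (grp_exp TYPE('b)) dvd n a0"
    proof (cases "n a0 = 0")
      case True then show ?thesis by simp
    next
      case False
      have "\<forall>b::'b. zsmult (n a0) b = 0"
      proof
        fix b :: 'b
        define f where "f = (\<lambda>x::'a. if x = 0 then b else 0)"
        have "gr_act n f (- a0) = 0" using H by simp
        moreover have "gr_act n f (- a0) = (\<Sum>a\<in>{a. n a \<noteq> 0}. if a = a0 then zsmult (n a) b else 0)"
          unfolding gr_act_def f_def
          by (rule sum.cong) (auto simp: add.commute eq_neg_iff_add_eq_0)
        moreover have "\<dots> = zsmult (n a0) b"
          using assms False by (simp add: fin_supp_def)
        ultimately show "zsmult (n a0) b = 0" by simp
      qed
      then have "grp_exp TYPE('b) dvd nat \<bar>n a0\<bar>"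
        using zsmult_zero_iff Pn_iff by blast
      then have "int (grp_exp TYPE('b)) dvd \<bar>n a0\<bar>"
        by (metis int_dvd_int_iff abs_ge_zero int_nat_eq)
      then show ?thesis by simp
    qed
  qed
next
  assume H: "\<forall>a. int (grp_exp TYPE('b)) dvd n a"
  show "\<forall>f :: 'a \<Rightarrow> 'b. gr_act n f = (\<lambda>_. 0)"
  proof (intro allI ext)
    fix f :: "'a \<Rightarrow> 'b" and x
    have "\<And>a y. zsmult (n a) (y::'b) = 0"
    proof -
      fix a y
      have "int (grp_exp TYPE('b)) dvd \<bar>n a\<bar>" using H by simp
      then have "grp_exp TYPE('b) dvd nat \<bar>n a\<bar>"
        by (metis int_dvd_int_iff abs_ge_zero int_nat_eq)
      then show "zsmult (n a) (y::'b) = 0" using zsmult_zero_iff Pn_iff by blast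
    qed
    then show "gr_act n f x = 0" by (simp add: gr_act_def)
  qed
qed

end
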